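(* Let $R$ be a rational map of degree $2$ having two attracting fixed points and one repelling fixed point. Then: (i) If the multipliers of the two attracting fixed points are equal, say to $\lambda$, then $R$ is conjugate (by a Möbius map) to $N_{h,p}$ with $h=1-\lambda$ and $p(z)=z^2-1$. (ii) If one of the attracting fixed points is superattracting and the multiplier of the other attracting fixed point is $\frac{n}{m}$, where $m\in\mathbb{N}$ and $n\in\mathbb{N}\setminus\{0\}$, then $R$ is conjugate to $N_{h,p}$ with $h=m-n$ and $p(z)=(z-1)^{m-n}(z+1)^m$. (iii) If the ratio of the residue fixed point indices of $R$ at the two attracting fixed points is $\frac{k}{m}$ with $k,m\in\mathbb{N}$, then there exists $h\in\mathbb{C}\setminus\{0\}$ such that $R$ is conjugate to $N_{h,p}$ with $p(z)=(z-1)^k(z+1)^m$.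
   Context: For a polynomial $p$ and $h\in\mathbb{C}$, $N_{h,p}(z)=z-h\,\frac{p(z)}{p'(z)}$. The residue fixed point index of $R$ at a fixed point $z_0$ is $\iota(R,z_0)=\frac{1}{2\pi i}\oint_\gamma\frac{dz}{z-R(z)}$ for a small positively oriented loop $\gamma$ around $z_0$ enclosing no other fixed point; if the multiplier $\lambda\neq 1$, then $\iota(R,z_0)=\frac{1}{1-\lambda}$. *)

theory Defs
  imports "HOL-Complex_Analysis.Complex_Analysis" "HOL-Computational_Algebra.Polynomial_Factorial" "HOL-Computational_Algebra.Field_as_Ring"
begin

text \<open>The Riemann sphere is modelled as complex option: Some z is the finite point z,
  None is the point at infinity.\<close>

definition red_num :: "complex poly \<Rightarrow> complex poly \<Rightarrow> complex poly" where
  "red_num P Q = P div gcd P Q"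

definition red_den :: "complex poly \<Rightarrow> complex poly \<Rightarrow> complex poly" where
  "red_den P Q = Q div gcd P Q"

definition rat_sphere :: "complex poly \<Rightarrow> complex poly \<Rightarrow> complex option \<Rightarrow> complex option" where
  "rat_sphere P Q \<zeta> = (let A = red_num P Q; B = red_den P Q in
     (case \<zeta> of
        Some z \<Rightarrow> (if poly B z = 0 then None else Some (poly A z / poly B z))
      | None \<Rightarrow> (if degree A > degree B then None
                 else if degree A = degree B then Some (lead_coeff A / lead_coeff B)
                 else Some 0)))"

definition finite_chart :: "complex poly \<Rightarrow> complex poly \<Rightarrow> complex \<Rightarrow> complex" where
  "finite_chart P Q = (\<lambda>z. poly (red_num P Q) z / poly (red_den P Q) z)"

text \<open>Expression of the map in the chart w = 1/z near infinity, i.e. w \<mapsto> 1 / R(1/w),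
  valid when infinity is a fixed point (degree of numerator > degree of denominator).\<close>
definition inf_chart :: "complex poly \<Rightarrow> complex poly \<Rightarrow> complex \<Rightarrow> complex" where
  "inf_chart P Q = (let A = red_num P Q; B = red_den P Q in
     (\<lambda>w. w ^ (degree A - degree B) * poly (reflect_poly B) w / poly (reflect_poly A) w))"

definition multiplier :: "complex poly \<Rightarrow> complex poly \<Rightarrow> complex option \<Rightarrow> complex" where
  "multiplier P Q \<zeta> = (case \<zeta> of
      Some z \<Rightarrow> deriv (finite_chart P Q) z
    | None \<Rightarrow> deriv (inf_chart P Q) 0)"

definition fp_index :: "complex poly \<Rightarrow> complex poly \<Rightarrow> complex option \<Rightarrow> complex" where
  "fp_index P Q \<zeta> = (case \<zeta> of
      Some z \<Rightarrow> residue (\<lambda>w. 1 / (w - finite_chart P Q w)) z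
    | None \<Rightarrow> residue (\<lambda>w. 1 / (w - inf_chart P Q w)) 0)"

definition mobius :: "complex \<Rightarrow> complex \<Rightarrow> complex \<Rightarrow> complex \<Rightarrow> complex option \<Rightarrow> complex option" where
  "mobius a b c d \<zeta> = (case \<zeta> of
      Some z \<Rightarrow> (if c * z + d = 0 then None else Some ((a * z + b) / (c * z + d)))
    | None \<Rightarrow> (if c = 0 then None else Some (a / c)))"

definition mobius_conjugate :: "(complex option \<Rightarrow> complex option) \<Rightarrow> (complex option \<Rightarrow> complex option) \<Rightarrow> bool" where
  "mobius_conjugate R S \<longleftrightarrow>
     (\<exists>a b c d. a * d - b * c \<noteq> 0 \<and> mobius a b c d \<circ> R = S \<circ> mobius a b c d)"

text \<open>Relaxed Newton map N_{h,p}(z) = z - h p(z)/p'(z) = (z p' - h p)/p' on the sphere.\<close>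
definition newton_sphere :: "complex \<Rightarrow> complex poly \<Rightarrow> complex option \<Rightarrow> complex option" where
  "newton_sphere h p = rat_sphere ([:0, 1:] * pderiv p - smult h p) (pderiv p)"

end

theory Submission
  imports Defs "HOL-Computational_Algebra.Fundamental_Theorem_Algebra"
begin

definition hom2 :: "complex poly \<Rightarrow> complex \<Rightarrow> complex \<Rightarrow> complex" where
  "hom2 A x y = coeff A 0 * y^2 + coeff A 1 * x * y + coeff A 2 * x^2"

definition pt :: "complex \<Rightarrow> complex \<Rightarrow> complex option" where
  "pt x y = (if y = 0 then None else Some (x / y))"

lemma poly2_expand: "degree (A::complex poly) \<le> 2 \<Longrightarrow> A = [:coeff A 0, coeff A 1, coeff A 2:]"
  apply (rule poly_eqI)
  subgoal for n
    apply (cases "n \<le> 2")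
     apply (auto simp: coeff_pCons numeral_2_eq_2 le_Suc_eq split: nat.split intro!: coeff_eq_0)
    done
  done

lemma poly2: "degree (A::complex poly) \<le> 2 \<Longrightarrow> poly A z = coeff A 0 + coeff A 1 * z + coeff A 2 * z^2"
  by (subst poly2_expand, assumption) (simp add: algebra_simps power2_eq_square)

lemma hom2_poly: "degree A \<le> 2 \<Longrightarrow> y \<noteq> 0 \<Longrightarrow> hom2 A x y = y^2 * poly A (x/y)"
  by (simp add: poly2 hom2_def power2_eq_square distrib_left)

lemma red_coprime: "coprime P Q \<Longrightarrow> red_num P Q = P \<and> red_den P Q = Q"
  by (simp add: red_num_def red_den_def coprime_iff_gcd_eq_1)


lemma rat_sphere_hom:
  assumes cop: "coprime P Q" and dP: "degree P \<le> 2" and dQ: "degree Q \<le> 2"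
    and md: "max (degree P) (degree Q) = 2" and nz: "x \<noteq> 0 \<or> y \<noteq> 0"
  shows "rat_sphere P Q (pt x y) = pt (hom2 P x y) (hom2 Q x y)"
proof (cases "y = 0")
  case False
  then show ?thesis using red_coprime[OF cop]
    by (simp add: rat_sphere_def hom2_poly dP dQ pt_def Let_def)
next
  case True
  then have x: "x \<noteq> 0" using nz by auto
  have h: "hom2 P x y = coeff P 2 * x^2" "hom2 Q x y = coeff Q 2 * x^2"
    using True by (simp_all add: hom2_def)
  consider "degree P > degree Q" | "degree P = degree Q" | "degree P < degree Q" by linarith
  then show ?thesis
  proof cases
    case 1
    then have "degree P = 2" "coeff Q 2 = 0" using md by (auto intro: coeff_eq_0)
    then show ?thesis using True 1 red_coprime[OF cop] h
      by (simp add: rat_sphere_def pt_def Let_def)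
  next
    case 2
    then have "degree P = 2" "degree Q = 2" using md by auto
    then have "coeff Q 2 \<noteq> 0" "coeff P 2 = lead_coeff P" "coeff Q 2 = lead_coeff Q"
      by (metis leading_coeff_0_iff zero_neq_numeral degree_0)+
    then show ?thesis using True 2 red_coprime[OF cop] h x
      by (simp add: rat_sphere_def pt_def Let_def)
  next
    case 3
    then have "degree Q = 2" "coeff P 2 = 0" using md by (auto intro: coeff_eq_0)
    then have "coeff Q 2 \<noteq> 0"
      by (metis leading_coeff_0_iff zero_neq_numeral degree_0)
    then show ?thesis using True 3 red_coprime[OF cop] h x \<open>coeff P 2 = 0\<close>
      by (simp add: rat_sphere_def pt_def Let_def)
  qed
qed

lemma hom_nz:
  assumes cop: "coprime P Q" and dP: "degree P \<le> 2" and dQ: "degree Q \<le> 2"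
    and md: "max (degree P) (degree Q) = 2" and nz: "x \<noteq> 0 \<or> y \<noteq> 0"
  shows "hom2 P x y \<noteq> 0 \<or> hom2 Q x y \<noteq> 0"
proof (cases "y = 0")
  case False
  then show ?thesis using coprime_poly_0[OF cop, of "x/y"]
    by (simp add: hom2_poly dP dQ)
next
  case True
  then have x: "x \<noteq> 0" using nz by auto
  have "coeff P 2 \<noteq> 0 \<or> coeff Q 2 \<noteq> 0"
    using md by (metis leading_coeff_0_iff max_def zero_neq_numeral degree_0)
  then show ?thesis using True x by (auto simp: hom2_def)
qed

lemma pt_scale: "k \<noteq> 0 \<Longrightarrow> pt (k*x) (k*y) = pt x y"
  by (simp add: pt_def)

lemma pt_eq_iff:
  assumes "x \<noteq> 0 \<or> y \<noteq> 0" "x' \<noteq> 0 \<or> y' \<noteq> 0"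
  shows "pt x y = pt x' y' \<longleftrightarrow> x * y' = x' * y"
  using assms by (auto simp: pt_def field_simps)

lemma divdiv: "(z::complex) \<noteq> 0 \<Longrightarrow> (p/z)/(q/z) = p/q"
  by (cases "q = 0") (simp_all add: field_simps)

lemma mobius_pt:
  assumes "a*d - b*c \<noteq> 0" "x \<noteq> 0 \<or> y \<noteq> 0"
  shows "mobius a b c d (pt x y) = pt (a*x + b*y) (c*x + d*y)"
proof (cases "y = 0")
  case True
  then have "x \<noteq> 0" using assms by auto
  then show ?thesis using True by (auto simp: mobius_def pt_def)
next
  case False
  have n1: "c*(x/y)+d = (c*x+d*y)/y" "a*(x/y)+b = (a*x+b*y)/y" using False
    by (metis add_divide_distrib nonzero_mult_div_cancel_right times_divide_eq_right)+
  have "mobius a b c d (pt x y) = mobius a b c d (Some (x/y))" by (simp add: pt_def False)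
  also have "\<dots> = (if c*(x/y)+d = 0 then None else Some ((a*(x/y)+b)/(c*(x/y)+d)))"
    by (simp only: mobius_def option.case)
  also have "\<dots> = (if (c*x+d*y)/y = 0 then None else Some (((a*x+b*y)/y)/((c*x+d*y)/y)))"
    by (simp only: n1)
  also have "\<dots> = pt (a*x + b*y) (c*x + d*y)"
    using False by (simp only: pt_def divdiv divide_eq_0_iff simp_thms)
  finally show ?thesis .
qed

definition rep :: "complex option \<Rightarrow> complex \<times> complex" where
  "rep \<zeta> = (case \<zeta> of Some z \<Rightarrow> (z, 1) | None \<Rightarrow> (1, 0))"

lemma pt_rep: "pt (fst (rep \<zeta>)) (snd (rep \<zeta>)) = \<zeta>"
  by (cases \<zeta>) (auto simp: rep_def pt_def)

lemma rep_nz: "fst (rep \<zeta>) \<noteq> 0 \<or> snd (rep \<zeta>) \<noteq> 0"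
  by (cases \<zeta>) (auto simp: rep_def)

lemma rep_det: "\<zeta> \<noteq> \<zeta>' \<Longrightarrow> fst (rep \<zeta>) * snd (rep \<zeta>') - snd (rep \<zeta>) * fst (rep \<zeta>') \<noteq> 0"
  by (cases \<zeta>; cases \<zeta>') (auto simp: rep_def)

lemma fixed_mu:
  assumes cop: "coprime P Q" and dP: "degree P \<le> 2" and dQ: "degree Q \<le> 2"
    and md: "max (degree P) (degree Q) = 2" and fx: "rat_sphere P Q \<zeta> = \<zeta>"
    and r: "rep \<zeta> = (x, y)"
  shows "\<exists>\<mu>. \<mu> \<noteq> 0 \<and> hom2 P x y = \<mu> * x \<and> hom2 Q x y = \<mu> * y"
proof -
  have nz: "x \<noteq> 0 \<or> y \<noteq> 0" using rep_nz[of \<zeta>] r by simp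
  have z: "\<zeta> = pt x y" using pt_rep[of \<zeta>] r by simp
  have hn: "hom2 P x y \<noteq> 0 \<or> hom2 Q x y \<noteq> 0" using hom_nz[OF cop dP dQ md nz] .
  have "pt (hom2 P x y) (hom2 Q x y) = pt x y"
    using fx rat_sphere_hom[OF cop dP dQ md nz] z by simp
  then have e: "hom2 P x y * y = x * hom2 Q x y" using pt_eq_iff[OF hn nz] by simp
  show ?thesis
  proof (cases "y = 0")
    case True
    then have "x \<noteq> 0" using nz by simp
    then have "hom2 Q x y = 0" using e True by simp
    then show ?thesis using True hn \<open>x \<noteq> 0\<close>
      by (intro exI[of _ "hom2 P x y / x"]) auto
  next
    case False
    then show ?thesis using e hn
      by (intro exI[of _ "hom2 Q x y / y"]) (auto simp: field_simps)
  qed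
qed


lemma conj_core:
  fixes Rs Ns :: "complex option \<Rightarrow> complex option"
    and RP RQ NP NQ :: "complex \<Rightarrow> complex \<Rightarrow> complex"
  assumes d12: "x1*y2 - y1*x2 \<noteq> 0" and d13: "x1*y3 - y1*x3 \<noteq> 0" and d23: "x2*y3 - y2*x3 \<noteq> 0"
    and RPd: "\<And>x y. RP x y = c*u1*x1*((x*y2 - y*x2)*(x*y3 - y*x3)) + c*u2*x2*((x*y1 - y*x1)*(x*y3 - y*x3)) + c*u3*x3*((x*y1 - y*x1)*(x*y2 - y*x2))"
    and RQd: "\<And>x y. RQ x y = c*u1*y1*((x*y2 - y*x2)*(x*y3 - y*x3)) + c*u2*y2*((x*y1 - y*x1)*(x*y3 - y*x3)) + c*u3*y3*((x*y1 - y*x1)*(x*y2 - y*x2))"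
    and NPd: "\<And>s t. NP s t = u1*((s+t)*(-t)) - u2*((s-t)*(-t)) + u3*((s-t)*(s+t))"
    and NQd: "\<And>s t. NQ s t = u1*((s+t)*(-t)) + u2*((s-t)*(-t))"
    and R: "\<And>x y. x \<noteq> 0 \<or> y \<noteq> 0 \<Longrightarrow> Rs (pt x y) = pt (RP x y) (RQ x y)"
    and N: "\<And>x y. x \<noteq> 0 \<or> y \<noteq> 0 \<Longrightarrow> Ns (pt x y) = pt (NP x y) (NQ x y)"
    and Nnz: "\<And>x y. x \<noteq> 0 \<or> y \<noteq> 0 \<Longrightarrow> NP x y \<noteq> 0 \<or> NQ x y \<noteq> 0"
    and c: "c \<noteq> 0"
  shows "mobius_conjugate Rs Ns"
proof -
  define D12 D13 D23 where "D12 = x1*y2 - y1*x2" and "D13 = x1*y3 - y1*x3" and "D23 = x2*y3 - y2*x3"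
  define g11 g12 g21 g22 where "g11 = - D12 * x3" and "g12 = 2 * D23 * x1 + D12 * x3"
    and "g21 = - D12 * y3" and "g22 = 2 * D23 * y1 + D12 * y3"
  define C where "C = - c * D12 * D13 * D23"
  have Del: "g11 * g22 - g12 * g21 = 2 * D12 * D13 * D23"
    unfolding g11_def g12_def g21_def g22_def D12_def D13_def D23_def by algebra
  have Dnz: "g11 * g22 - g12 * g21 \<noteq> 0" using d12 d13 d23 by (simp add: Del D12_def D13_def D23_def)
  have Cnz: "C \<noteq> 0" using d12 d13 d23 c by (simp add: C_def D12_def D13_def D23_def)
  have idP: "RP (g11 * s + g12 * t) (g21 * s + g22 * t) = C * (g11 * NP s t + g12 * NQ s t)" for s t
    unfolding RPd NPd NQd C_def g11_def g12_def g21_def g22_def D12_def D13_def D23_def by algebra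
  have idQ: "RQ (g11 * s + g12 * t) (g21 * s + g22 * t) = C * (g21 * NP s t + g22 * NQ s t)" for s t
    unfolding RQd NPd NQd C_def g11_def g12_def g21_def g22_def D12_def D13_def D23_def by algebra
  show ?thesis unfolding mobius_conjugate_def
  proof (intro exI conjI)
    show "g22 * g11 - (- g12) * (- g21) \<noteq> 0" using Dnz by (simp add: algebra_simps)
    show "mobius g22 (- g12) (- g21) g11 \<circ> Rs = Ns \<circ> mobius g22 (- g12) (- g21) g11"
    proof
      fix \<zeta>
      define \<Delta> where "\<Delta> = g11 * g22 - g12 * g21"
      have dm: "g22 * g11 - (- g12) * (- g21) \<noteq> 0" using Dnz by (simp add: algebra_simps)
      obtain p q where pq: "rep \<zeta> = (p, q)" by (cases "rep \<zeta>")
      have pqnz: "p \<noteq> 0 \<or> q \<noteq> 0" using rep_nz[of \<zeta>] pq by simp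
      have z: "\<zeta> = pt p q" using pt_rep[of \<zeta>] pq by simp
      define s t where "s = (g22*p - g12*q) / \<Delta>" and "t = (g11*q - g21*p) / \<Delta>"
      have Dn: "\<Delta> \<noteq> 0" using Dnz \<Delta>_def by simp
      have sp1: "g11 * s + g12 * t = (g11*(g22*p - g12*q) + g12*(g11*q - g21*p)) / \<Delta>"
        by (simp only: s_def t_def times_divide_eq_right add_divide_distrib)
      also have "\<dots> = (\<Delta> * p) / \<Delta>" unfolding \<Delta>_def by (rule arg_cong[where f="\<lambda>u. u / _"]) algebra
      also have "\<dots> = p" using Dn by simp
      finally have sp1': "g11 * s + g12 * t = p" .
      have sp2: "g21 * s + g22 * t = (g21*(g22*p - g12*q) + g22*(g11*q - g21*p)) / \<Delta>"
        by (simp only: s_def t_def times_divide_eq_right add_divide_distrib)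
      also have "\<dots> = (\<Delta> * q) / \<Delta>" unfolding \<Delta>_def by (rule arg_cong[where f="\<lambda>u. u / _"]) algebra
      also have "\<dots> = q" using Dn by simp
      finally have sp2': "g21 * s + g22 * t = q" .
      note sp = sp1' sp2'
      have stnz: "s \<noteq> 0 \<or> t \<noteq> 0" using sp pqnz by auto
      have z': "\<zeta> = pt (g11 * s + g12 * t) (g21 * s + g22 * t)" using z sp by simp
      have Nn: "NP s t \<noteq> 0 \<or> NQ s t \<noteq> 0" using Nnz[OF stnz] .
      have GNn: "g11 * NP s t + g12 * NQ s t \<noteq> 0 \<or> g21 * NP s t + g22 * NQ s t \<noteq> 0"
      proof (rule ccontr)
        assume "\<not> ?thesis"
        then have "g22 * (g11 * NP s t + g12 * NQ s t) - g12 * (g21 * NP s t + g22 * NQ s t) = 0"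
          "g11 * (g21 * NP s t + g22 * NQ s t) - g21 * (g11 * NP s t + g12 * NQ s t) = 0" by auto
        then have "(g11 * g22 - g12 * g21) * NP s t = 0" "(g11 * g22 - g12 * g21) * NQ s t = 0"
          by (simp_all add: algebra_simps)
        then show False using Dnz Nn by simp
      qed
      have GN0: "g11 * s + g12 * t \<noteq> 0 \<or> g21 * s + g22 * t \<noteq> 0" using sp pqnz by simp
      have Rz: "Rs \<zeta> = pt (RP (g11 * s + g12 * t) (g21 * s + g22 * t)) (RQ (g11 * s + g12 * t) (g21 * s + g22 * t))"
        by (subst z', rule R[OF GN0])
      have "(mobius g22 (- g12) (- g21) g11 \<circ> Rs) \<zeta>
          = mobius g22 (- g12) (- g21) g11 (pt (C * (g11 * NP s t + g12 * NQ s t)) (C * (g21 * NP s t + g22 * NQ s t)))"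
        by (simp only: o_apply Rz idP idQ)
      also have "\<dots> = mobius g22 (- g12) (- g21) g11 (pt (g11 * NP s t + g12 * NQ s t) (g21 * NP s t + g22 * NQ s t))"
        using pt_scale[OF Cnz] by simp
      also have "\<dots> = pt (g22 * (g11 * NP s t + g12 * NQ s t) + - g12 * (g21 * NP s t + g22 * NQ s t))
                          (- g21 * (g11 * NP s t + g12 * NQ s t) + g11 * (g21 * NP s t + g22 * NQ s t))"
        by (rule mobius_pt[OF dm GNn])
      also have "\<dots> = pt (\<Delta> * NP s t) (\<Delta> * NQ s t)"
        unfolding \<Delta>_def by (simp add: algebra_simps)
      also have "\<dots> = pt (NP s t) (NQ s t)" using pt_scale Dnz \<Delta>_def by simp
      finally have L: "(mobius g22 (- g12) (- g21) g11 \<circ> Rs) \<zeta> = pt (NP s t) (NQ s t)" .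
      have "mobius g22 (- g12) (- g21) g11 \<zeta> = pt (g22 * (g11 * s + g12 * t) + - g12 * (g21 * s + g22 * t))
                          (- g21 * (g11 * s + g12 * t) + g11 * (g21 * s + g22 * t))"
        by (subst z', rule mobius_pt[OF dm GN0])
      also have "\<dots> = pt (\<Delta> * s) (\<Delta> * t)"
        unfolding \<Delta>_def by (simp add: algebra_simps)
      also have "\<dots> = pt s t" using pt_scale Dnz \<Delta>_def by simp
      finally have "(Ns \<circ> mobius g22 (- g12) (- g21) g11) \<zeta> = pt (NP s t) (NQ s t)"
        using N[OF stnz] by simp
      then show "(mobius g22 (- g12) (- g21) g11 \<circ> Rs) \<zeta> = (Ns \<circ> mobius g22 (- g12) (- g21) g11) \<zeta>"
        using L by simp
    qed
  qed
qed

lemma coprime_no_root: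
  fixes A B :: "complex poly"
  assumes nr: "\<And>z. poly A z \<noteq> 0 \<or> poly B z \<noteq> 0"
  shows "coprime A B"
proof (rule coprimeI)
  fix d assume dA: "d dvd A" and dB: "d dvd B"
  have dnz: "d \<noteq> 0"
  proof
    assume "d = 0"
    then have "A = 0" "B = 0" using dA dB by auto
    then show False using nr[of 0] by simp
  qed
  show "is_unit d"
  proof (cases "degree d = 0")
    case True
    then show ?thesis using is_unit_iff_degree[OF dnz] by simp
  next
    case False
    then have "\<not> constant (poly d)" using constant_degree[of d] by simp
    then obtain z where z: "poly d z = 0" using fundamental_theorem_of_algebra[of d] by blast
    from dA obtain e where "A = d * e" by (auto elim: dvdE)
    then have "poly A z = 0" using z by simp
    moreover from dB obtain f where "B = d * f" by (auto elim: dvdE)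
    then have "poly B z = 0" using z by simp
    ultimately show ?thesis using nr[of z] by simp
  qed
qed

lemma red_mult_cancel:
  fixes T A B :: "complex poly"
  assumes T: "T \<noteq> 0" and cop: "coprime A B"
  shows "\<exists>c. c \<noteq> 0 \<and> red_num (T*A) (T*B) = smult c A \<and> red_den (T*A) (T*B) = smult c B"
proof -
  have g: "gcd (T*A) (T*B) = normalize T"
    using cop by (simp add: gcd_mult_left coprime_iff_gcd_eq_1)
  have "is_unit (unit_factor T)" using T by simp
  then obtain c where c: "unit_factor T = [:c:]" "c dvd 1" using is_unit_poly_iff by blast
  then have cnz: "c \<noteq> 0" by auto
  have nT: "normalize T \<noteq> 0" using T by simp
  have uT: "T = smult c (normalize T)" using unit_factor_mult_normalize[of T] c by simp
  have TA: "T * A = smult c A * normalize T" "T * B = smult c B * normalize T"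
    by (subst (1) uT, simp add: mult.commute)+
  show ?thesis
    using cnz nT unfolding red_num_def red_den_def g
    by (intro exI[of _ c]) (simp only: TA nonzero_mult_div_cancel_right[OF nT] simp_thms)
qed

lemma rat_sphere_cancel:
  fixes T A B :: "complex poly"
  assumes T: "T \<noteq> 0" and cop: "coprime A B"
  shows "rat_sphere (T*A) (T*B) = rat_sphere A B"
proof
  fix \<zeta>
  obtain c where c: "c \<noteq> 0" "red_num (T*A) (T*B) = smult c A" "red_den (T*A) (T*B) = smult c B"
    using red_mult_cancel[OF T cop] by blast
  show "rat_sphere (T*A) (T*B) \<zeta> = rat_sphere A B \<zeta>"
    using c red_coprime[OF cop] by (cases \<zeta>) (simp_all add: rat_sphere_def Let_def)
qed

lemma smult_as_mult: "smult c p = [:c:] * p"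
  by simp

lemma pderiv_XY:
  fixes X Y :: "complex poly"
  shows "pderiv (X ^ Suc k * Y ^ Suc m)
     = X ^ k * Y ^ m * ([:of_nat (Suc m):] * X * pderiv Y + [:of_nat (Suc k):] * Y * pderiv X)"
proof -
  have "pderiv (X ^ Suc k * Y ^ Suc m) = X ^ Suc k * ([:of_nat (Suc m):] * Y ^ m * pderiv Y) + Y ^ Suc m * ([:of_nat (Suc k):] * X ^ k * pderiv X)"
    by (simp only: pderiv_mult pderiv_power_Suc smult_as_mult)
  also have "\<dots> = X ^ k * Y ^ m * ([:of_nat (Suc m):] * X * pderiv Y + [:of_nat (Suc k):] * Y * pderiv X)"
    by (simp only: power_Suc) algebra
  finally show ?thesis .
qed

lemma pderiv_km:
  "pderiv ([:-1,1:] ^ Suc k * [:1,1:] ^ Suc m :: complex poly)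
     = [:-1,1:] ^ k * [:1,1:] ^ m * [:of_nat (Suc k) - of_nat (Suc m), of_nat (Suc k) + of_nat (Suc m):]"
proof -
  have e: "[:of_nat (Suc m):] * [:-1,1:] * pderiv [:1,1:] + [:of_nat (Suc k):] * [:1,1:] * pderiv [:-1,1:]
       = ([:of_nat (Suc k) - of_nat (Suc m), of_nat (Suc k) + of_nat (Suc m):] :: complex poly)"
    by (simp add: pderiv_pCons algebra_simps)
  show ?thesis by (simp only: pderiv_XY e)
qed

lemma newton_XY:
  fixes X Y Z B :: "complex poly"
  shows "Z * (X ^ k * Y ^ m * B) - smult h (X ^ Suc k * Y ^ Suc m) = X ^ k * Y ^ m * (Z * B - [:h:] * (X * Y))"
  by (simp only: smult_as_mult power_Suc) algebra

lemma newton_km: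
  fixes h :: complex and k m :: nat
  assumes "k \<ge> 1" "m \<ge> 1"
  shows "newton_sphere h ([:-1,1:] ^ k * [:1,1:] ^ m)
       = rat_sphere ([:-1,1:] ^ (k-1) * [:1,1:] ^ (m-1) * [:h, of_nat k - of_nat m, of_nat k + of_nat m - h:])
                    ([:-1,1:] ^ (k-1) * [:1,1:] ^ (m-1) * [:of_nat k - of_nat m, of_nat k + of_nat m:])"
proof -
  obtain k' m' where km: "k = Suc k'" "m = Suc m'" using assms by (metis Suc_pred' less_eq_Suc_le One_nat_def)
  have e: "[:0, 1:] * [:of_nat (Suc k') - of_nat (Suc m'), of_nat (Suc k') + of_nat (Suc m'):]
        - [:h:] * ([:-1,1:] * [:1,1:])
        = ([:h, of_nat (Suc k') - of_nat (Suc m'), of_nat (Suc k') + of_nat (Suc m') - h:] :: complex poly)"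
    by (simp add: algebra_simps)
  show ?thesis unfolding newton_sphere_def km
    by (simp only: pderiv_km diff_Suc_1 newton_XY e)
qed

lemma coeff3_2 [simp]: "coeff [:a,b,c:] 2 = c" and coeff2_2 [simp]: "coeff [:a,b:] 2 = 0"
  by (simp_all add: numeral_2_eq_2)

lemma newton_hom:
  fixes h :: complex and k m :: nat
  assumes k1: "k \<ge> 1" and m1: "m \<ge> 1" and h0: "h \<noteq> 0" and hkm: "h \<noteq> of_nat k + of_nat m"
  defines "A \<equiv> [:h, of_nat k - of_nat m, of_nat k + of_nat m - h:]"
    and "B \<equiv> [:of_nat k - of_nat m, of_nat k + of_nat m:]"
  shows "\<And>s t. s \<noteq> 0 \<or> t \<noteq> 0 \<Longrightarrow> newton_sphere h ([:-1,1:] ^ k * [:1,1:] ^ m) (pt s t) = pt (hom2 A s t) (hom2 B s t)"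
    and "\<And>s t. s \<noteq> 0 \<or> t \<noteq> 0 \<Longrightarrow> hom2 A s t \<noteq> 0 \<or> hom2 B s t \<noteq> 0"
    and "\<And>s t. hom2 A s t = (- of_nat k)*((s+t)*(-t)) - (- of_nat m)*((s-t)*(-t)) + (of_nat k + of_nat m - h)*((s-t)*(s+t))"
    and "\<And>s t. hom2 B s t = (- of_nat k)*((s+t)*(-t)) + (- of_nat m)*((s-t)*(-t))"
proof -
  have c2: "of_nat k + of_nat m - h \<noteq> 0" using hkm by simp
  have cop: "coprime A B"
  proof (rule coprime_no_root)
    fix z
    show "poly A z \<noteq> 0 \<or> poly B z \<noteq> 0"
    proof (rule ccontr)
      assume "\<not> ?thesis"
      then have a: "h + (of_nat k - of_nat m) * z + (of_nat k + of_nat m - h) * z^2 = 0"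
        and b: "of_nat k - of_nat m + (of_nat k + of_nat m) * z = 0"
        by (auto simp: A_def B_def algebra_simps power2_eq_square)
      have "h * ((1 - z) * (1 + z)) = 0" using a b by algebra
      then have "(1 - z) * (1 + z) = 0" using h0 by simp
      then have "1 - z = 0 \<or> 1 + z = 0" by simp
      then have "z = 1 \<or> z = -1" by (auto simp: add_eq_0_iff)
      then show False
      proof
        assume "z = 1"
        then have "2 * of_nat k = (0::complex)" using b by (simp add: algebra_simps)
        then show False using k1 by simp
      next
        assume "z = -1"
        then have "2 * of_nat m = (0::complex)" using b by (simp add: algebra_simps)
        then show False using m1 by simp
      qed
    qed
  qed
  define T :: "complex poly" where "T = [:-1,1:] ^ (k-1) * [:1,1:] ^ (m-1)"
  have T0: "T \<noteq> 0" by (simp add: T_def)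
  have N: "newton_sphere h ([:-1,1:] ^ k * [:1,1:] ^ m) = rat_sphere A B"
    using newton_km[OF k1 m1, of h] rat_sphere_cancel[OF T0 cop]
    unfolding T_def A_def B_def by simp
  have dA: "degree A = 2" using c2 by (simp add: A_def)
  have dB: "degree B \<le> 2" by (simp add: B_def)
  have dA': "degree A \<le> 2" using dA by simp
  have md: "max (degree A) (degree B) = 2" using dA dB by simp
  show "\<And>s t. s \<noteq> 0 \<or> t \<noteq> 0 \<Longrightarrow> newton_sphere h ([:-1,1:] ^ k * [:1,1:] ^ m) (pt s t) = pt (hom2 A s t) (hom2 B s t)"
    using rat_sphere_hom[OF cop dA' dB md] N by simp
  show "\<And>s t. s \<noteq> 0 \<or> t \<noteq> 0 \<Longrightarrow> hom2 A s t \<noteq> 0 \<or> hom2 B s t \<noteq> 0"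
    using hom_nz[OF cop dA' dB md] by simp
  show "\<And>s t. hom2 A s t = (- of_nat k)*((s+t)*(-t)) - (- of_nat m)*((s-t)*(-t)) + (of_nat k + of_nat m - h)*((s-t)*(s+t))"
    by (simp add: hom2_def A_def algebra_simps power2_eq_square)
  show "\<And>s t. hom2 B s t = (- of_nat k)*((s+t)*(-t)) + (- of_nat m)*((s-t)*(-t))"
    by (simp add: hom2_def B_def algebra_simps power2_eq_square)
qed

lemma point_finite:
  fixes P Q :: "complex poly"
  assumes cop: "coprime P Q" and dP: "degree P \<le> 2" and dQ: "degree Q \<le> 2"
    and F: "\<And>w. w * hom2 Q w 1 - hom2 P w 1 = \<kappa> * (w - z) * ((w*b1 - a1)*(w*b2 - a2))"
    and mu: "hom2 Q z 1 = \<mu>" "\<mu> \<noteq> 0"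
  shows "multiplier P Q (Some z) = 1 - \<kappa> * ((z*b1 - a1)*(z*b2 - a2)) / \<mu>"
proof -
  define q0 q1 q2 where "q0 = coeff Q 0" "q1 = coeff Q 1" "q2 = coeff Q 2"
  have HQ: "hom2 Q w 1 = q0 + q1*w + q2*w^2" for w by (simp add: hom2_def q0_q1_q2_def)
  have fc: "finite_chart P Q = (\<lambda>w. (w * (q0 + q1*w + q2*w^2) - \<kappa>*(w - z)*((w*b1 - a1)*(w*b2 - a2))) / (q0 + q1*w + q2*w^2))"
  proof
    fix w
    have "poly P w = hom2 P w 1" "poly Q w = hom2 Q w 1" using hom2_poly[OF dP, of 1 w] hom2_poly[OF dQ, of 1 w] by simp_all
    then show "finite_chart P Q w = (w * (q0 + q1*w + q2*w^2) - \<kappa>*(w - z)*((w*b1 - a1)*(w*b2 - a2))) / (q0 + q1*w + q2*w^2)"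
      using F[of w] red_coprime[OF cop] by (simp add: finite_chart_def HQ algebra_simps)
  qed
  have mu': "q0 + q1*z + q2*z^2 = \<mu>" using mu HQ by simp
  have "((\<lambda>w. (w * (q0 + q1*w + q2*w^2) - \<kappa>*(w - z)*((w*b1 - a1)*(w*b2 - a2))) / (q0 + q1*w + q2*w^2))
        has_field_derivative (1 - \<kappa> * ((z*b1 - a1)*(z*b2 - a2)) / \<mu>)) (at z)"
    apply (auto intro!: derivative_eq_intros simp: mu' mu)
    using mu(2) by (simp add: field_simps power2_eq_square)
  then show ?thesis by (simp add: multiplier_def fc DERIV_imp_deriv)
qed


lemma point_finite_index:
  fixes P Q :: "complex poly"
  assumes cop: "coprime P Q" and dP: "degree P \<le> 2" and dQ: "degree Q \<le> 2"
    and F: "\<And>w. w * hom2 Q w 1 - hom2 P w 1 = \<kappa> * (w - z) * ((w*b1 - a1)*(w*b2 - a2))"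
    and mu: "hom2 Q z 1 = \<mu>" "\<mu> \<noteq> 0" and k: "\<kappa> \<noteq> 0" and E: "(z*b1 - a1)*(z*b2 - a2) \<noteq> 0"
  shows "fp_index P Q (Some z) = \<mu> / (\<kappa> * ((z*b1 - a1)*(z*b2 - a2)))"
proof -
  define q0 q1 q2 where "q0 = coeff Q 0" "q1 = coeff Q 1" "q2 = coeff Q 2"
  have HQ: "hom2 Q w 1 = q0 + q1*w + q2*w^2" for w by (simp add: hom2_def q0_q1_q2_def)
  have fc: "finite_chart P Q = (\<lambda>w. (w * (q0 + q1*w + q2*w^2) - \<kappa>*(w - z)*((w*b1 - a1)*(w*b2 - a2))) / (q0 + q1*w + q2*w^2))"
  proof
    fix w
    have "poly P w = hom2 P w 1" "poly Q w = hom2 Q w 1" using hom2_poly[OF dP, of 1 w] hom2_poly[OF dQ, of 1 w] by simp_all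
    then show "finite_chart P Q w = (w * (q0 + q1*w + q2*w^2) - \<kappa>*(w - z)*((w*b1 - a1)*(w*b2 - a2))) / (q0 + q1*w + q2*w^2)"
      using F[of w] red_coprime[OF cop] by (simp add: finite_chart_def HQ algebra_simps)
  qed
  have mu': "q0 + q1*z + q2*z^2 = \<mu>" using mu HQ by simp
  define S where "S = {w. q0 + q1*w + q2*w^2 \<noteq> 0} \<inter> {w. (w*b1 - a1)*(w*b2 - a2) \<noteq> 0}"
  have oS: "open S" unfolding S_def
    by (intro open_Int open_Collect_neq continuous_intros)
  have zS: "z \<in> S" using mu' mu E by (simp add: S_def)
  define f where "f = (\<lambda>w. (q0 + q1*w + q2*w^2) / (\<kappa> * ((w*b1 - a1)*(w*b2 - a2))))"
  have hol: "f holomorphic_on S" unfolding f_def S_def using k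
    by (intro holomorphic_intros) auto
  have ev: "eventually (\<lambda>w. 1 / (w - finite_chart P Q w) = f w / (w - z)) (at z)"
  proof -
    have "eventually (\<lambda>w. w \<in> S - {z}) (at z)" by (rule eventually_at_in_open[OF oS zS])
    then show ?thesis
    proof (rule eventually_mono)
      fix w assume w: "w \<in> S - {z}"
      then have a: "q0 + q1*w + q2*w^2 \<noteq> 0" "(w*b1 - a1)*(w*b2 - a2) \<noteq> 0" "w - z \<noteq> 0"
        by (auto simp: S_def)
      show "1 / (w - finite_chart P Q w) = f w / (w - z)"
        using a k by (simp add: fc f_def field_simps)
    qed
  qed
  have "fp_index P Q (Some z) = residue (\<lambda>w. f w / (w - z)) z"
    unfolding fp_index_def by (simp add: residue_cong[OF ev])
  also have "\<dots> = f z" by (rule residue_simple[OF oS zS hol])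
  also have "\<dots> = \<mu> / (\<kappa> * ((z*b1 - a1)*(z*b2 - a2)))" by (simp add: f_def mu')
  finally show ?thesis .
qed


lemma inf_chart_hom:
  fixes P Q :: "complex poly"
  assumes cop: "coprime P Q" and dP: "degree P = 2" and dQ: "degree Q < 2"
  shows "inf_chart P Q w = hom2 Q 1 w / hom2 P 1 w"
proof (cases "w = 0")
  case True
  have "coeff Q 2 = 0" using dQ by (intro coeff_eq_0) simp
  then show ?thesis using True dP dQ red_coprime[OF cop]
    by (simp add: inf_chart_def hom2_def Let_def)
next
  case False
  have e: "w ^ (2 - degree Q) * w ^ degree Q = w^2" using dQ
    by (metis le_add_diff_inverse2 less_imp_le_nat power_add)
  have "inf_chart P Q w = w ^ (2 - degree Q) * (w ^ degree Q * poly Q (inverse w)) / (w^2 * poly P (inverse w))"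
    using False dP red_coprime[OF cop] by (simp add: inf_chart_def Let_def poly_reflect_poly_nz)
  also have "\<dots> = (w^2 * poly Q (1/w)) / (w^2 * poly P (1/w))"
    by (simp add: e mult.assoc[symmetric] inverse_eq_divide)
  also have "\<dots> = hom2 Q 1 w / hom2 P 1 w"
    using hom2_poly[of Q w 1] hom2_poly[of P w 1] dP dQ False by simp
  finally show ?thesis .
qed

lemma point_inf:
  fixes P Q :: "complex poly"
  assumes cop: "coprime P Q" and dP: "degree P = 2" and dQ: "degree Q < 2"
    and F: "\<And>w. hom2 Q 1 w - w * hom2 P 1 w = - \<kappa> * w * ((b1 - w*a1)*(b2 - w*a2))"
    and mu: "hom2 P 1 0 = \<mu>" "\<mu> \<noteq> 0"
  shows "multiplier P Q None = 1 - \<kappa> * (b1*b2) / \<mu>"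
    and "\<kappa> \<noteq> 0 \<Longrightarrow> b1*b2 \<noteq> 0 \<Longrightarrow> fp_index P Q None = \<mu> / (\<kappa> * (b1*b2))"
proof -
  define p0 p1 p2 where "p0 = coeff P 0" "p1 = coeff P 1" "p2 = coeff P 2"
  have HP: "hom2 P 1 w = p0*w^2 + p1*w + p2" for w by (simp add: hom2_def p0_p1_p2_def)
  have fc: "inf_chart P Q = (\<lambda>w. (w * (p0*w^2 + p1*w + p2) - \<kappa>*w*((b1 - w*a1)*(b2 - w*a2))) / (p0*w^2 + p1*w + p2))"
  proof
    fix w
    show "inf_chart P Q w = (w * (p0*w^2 + p1*w + p2) - \<kappa>*w*((b1 - w*a1)*(b2 - w*a2))) / (p0*w^2 + p1*w + p2)"
      using F[of w] inf_chart_hom[OF cop dP dQ, of w] by (simp add: HP algebra_simps)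
  qed
  have mu': "p2 = \<mu>" using mu HP[of 0] by simp
  have "((\<lambda>w. (w * (p0*w^2 + p1*w + p2) - \<kappa>*w*((b1 - w*a1)*(b2 - w*a2))) / (p0*w^2 + p1*w + p2))
        has_field_derivative (1 - \<kappa> * (b1*b2) / \<mu>)) (at 0)"
    apply (auto intro!: derivative_eq_intros simp: mu' mu)
    using mu(2) by (simp add: field_simps power2_eq_square)
  then show "multiplier P Q None = 1 - \<kappa> * (b1*b2) / \<mu>" by (simp add: multiplier_def fc DERIV_imp_deriv)
  assume k: "\<kappa> \<noteq> 0" and E: "b1*b2 \<noteq> 0"
  define S where "S = {w. p0*w^2 + p1*w + p2 \<noteq> 0} \<inter> {w. (b1 - w*a1)*(b2 - w*a2) \<noteq> 0}"
  have oS: "open S" unfolding S_def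
    by (intro open_Int open_Collect_neq continuous_intros)
  have zS: "0 \<in> S" using mu' mu E by (simp add: S_def)
  define f where "f = (\<lambda>w. (p0*w^2 + p1*w + p2) / (\<kappa> * ((b1 - w*a1)*(b2 - w*a2))))"
  have hol: "f holomorphic_on S" unfolding f_def S_def using k
    by (intro holomorphic_intros) auto
  have ev: "eventually (\<lambda>w. 1 / (w - inf_chart P Q w) = f w / (w - 0)) (at 0)"
  proof -
    have "eventually (\<lambda>w. w \<in> S - {0}) (at 0)" by (rule eventually_at_in_open[OF oS zS])
    then show ?thesis
    proof (rule eventually_mono)
      fix w assume w: "w \<in> S - {0}"
      then have a: "p0*w^2 + p1*w + p2 \<noteq> 0" "(b1 - w*a1)*(b2 - w*a2) \<noteq> 0" "w \<noteq> 0"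
        by (auto simp: S_def)
      show "1 / (w - inf_chart P Q w) = f w / (w - 0)"
        using a k by (simp add: fc f_def field_simps)
    qed
  qed
  have "fp_index P Q None = residue (\<lambda>w. f w / (w - 0)) 0"
    unfolding fp_index_def by (simp add: residue_cong[OF ev])
  also have "\<dots> = f 0" by (rule residue_simple[OF oS zS hol])
  also have "\<dots> = \<mu> / (\<kappa> * (b1*b2))" by (simp add: f_def mu')
  finally show "fp_index P Q None = \<mu> / (\<kappa> * (b1*b2))" .
qed

lemma point_general:
  fixes P Q :: "complex poly"
  assumes cop: "coprime P Q" and md: "max (degree P) (degree Q) = 2"
    and fx: "rat_sphere P Q \<zeta> = \<zeta>" and r: "rep \<zeta> = (x0, y0)"
    and F: "\<And>x y. x * hom2 Q x y - y * hom2 P x y = \<kappa> * (x*y0 - y*x0) * ((x*b1 - y*a1)*(x*b2 - y*a2))"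
    and mu: "hom2 P x0 y0 = \<mu> * x0" "hom2 Q x0 y0 = \<mu> * y0" "\<mu> \<noteq> 0"
  shows "multiplier P Q \<zeta> = 1 - \<kappa> * ((x0*b1 - y0*a1)*(x0*b2 - y0*a2)) / \<mu>"
    and "\<kappa> \<noteq> 0 \<Longrightarrow> (x0*b1 - y0*a1)*(x0*b2 - y0*a2) \<noteq> 0 \<Longrightarrow>
         fp_index P Q \<zeta> = \<mu> / (\<kappa> * ((x0*b1 - y0*a1)*(x0*b2 - y0*a2)))"
proof -
  have dP: "degree P \<le> 2" and dQ: "degree Q \<le> 2" using md by auto
  have "multiplier P Q \<zeta> = 1 - \<kappa> * ((x0*b1 - y0*a1)*(x0*b2 - y0*a2)) / \<mu> \<and>
    (\<kappa> \<noteq> 0 \<longrightarrow> (x0*b1 - y0*a1)*(x0*b2 - y0*a2) \<noteq> 0 \<longrightarrow>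
         fp_index P Q \<zeta> = \<mu> / (\<kappa> * ((x0*b1 - y0*a1)*(x0*b2 - y0*a2))))"
  proof (cases \<zeta>)
    case (Some z)
    then have xy: "x0 = z" "y0 = 1" using r by (auto simp: rep_def)
    have F': "w * hom2 Q w 1 - hom2 P w 1 = \<kappa> * (w - z) * ((w*b1 - a1)*(w*b2 - a2))" for w
      using F[of w 1] xy by simp
    have mu': "hom2 Q z 1 = \<mu>" using mu xy by simp
    show ?thesis using point_finite[OF cop dP dQ F' mu' mu(3)] point_finite_index[OF cop dP dQ F' mu' mu(3)]
      Some xy by simp
  next
    case None
    then have xy: "x0 = 1" "y0 = 0" using r by (auto simp: rep_def)
    have "\<not> degree P \<le> degree Q"
    proof
      assume "degree P \<le> degree Q"
      then show False using fx None red_coprime[OF cop] by (auto simp: rat_sphere_def Let_def split: if_splits)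
    qed
    then have dP2: "degree P = 2" and dQ2: "degree Q < 2" using md by auto
    have F': "hom2 Q 1 w - w * hom2 P 1 w = - \<kappa> * w * ((b1 - w*a1)*(b2 - w*a2))" for w
      using F[of 1 w] xy by simp
    have mu': "hom2 P 1 0 = \<mu>" using mu xy by simp
    show ?thesis using point_inf[OF cop dP2 dQ2 F' mu' mu(3)] None xy by simp
  qed
  then show "multiplier P Q \<zeta> = 1 - \<kappa> * ((x0*b1 - y0*a1)*(x0*b2 - y0*a2)) / \<mu>"
    and "\<kappa> \<noteq> 0 \<Longrightarrow> (x0*b1 - y0*a1)*(x0*b2 - y0*a2) \<noteq> 0 \<Longrightarrow>
         fp_index P Q \<zeta> = \<mu> / (\<kappa> * ((x0*b1 - y0*a1)*(x0*b2 - y0*a2)))" by auto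
qed

lemma lagrange_poly:
  fixes c0 c1 c2 x y x1 y1 x2 y2 x3 y3 :: complex
  shows "(c0*y^2 + c1*x*y + c2*x^2) * ((x1*y2 - y1*x2)*(x1*y3 - y1*x3)*(x2*y3 - y2*x3)) =
     (c0*y1^2 + c1*x1*y1 + c2*x1^2) * ((x*y2 - y*x2)*(x*y3 - y*x3)) * (x2*y3 - y2*x3)
   - (c0*y2^2 + c1*x2*y2 + c2*x2^2) * ((x*y1 - y*x1)*(x*y3 - y*x3)) * (x1*y3 - y1*x3)
   + (c0*y3^2 + c1*x3*y3 + c2*x3^2) * ((x*y1 - y*x1)*(x*y2 - y*x2)) * (x1*y2 - y1*x2)"
  by algebra

lemma lag_tau:
  fixes x1 y1 x2 y2 x3 y3 w1 w2 w3 m1 m2 m3 x y :: complex and A :: "complex poly"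
  assumes d12: "x1*y2 - y1*x2 \<noteq> 0" and d13: "x1*y3 - y1*x3 \<noteq> 0" and d23: "x2*y3 - y2*x3 \<noteq> 0"
    and h1: "hom2 A x1 y1 = m1 * w1" and h2: "hom2 A x2 y2 = m2 * w2" and h3: "hom2 A x3 y3 = m3 * w3"
  shows "hom2 A x y = m1 / ((x1*y2 - y1*x2)*(x1*y3 - y1*x3)) * w1 * ((x*y2 - y*x2)*(x*y3 - y*x3))
     + (- m2 / ((x1*y2 - y1*x2)*(x2*y3 - y2*x3))) * w2 * ((x*y1 - y*x1)*(x*y3 - y*x3))
     + m3 / ((x1*y3 - y1*x3)*(x2*y3 - y2*x3)) * w3 * ((x*y1 - y*x1)*(x*y2 - y*x2))"
proof -
  define D12 D13 D23 where "D12 = x1*y2 - y1*x2" and "D13 = x1*y3 - y1*x3" and "D23 = x2*y3 - y2*x3"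
  define L1 L2 L3 where "L1 = x*y1 - y*x1" and "L2 = x*y2 - y*x2" and "L3 = x*y3 - y*x3"
  have lp: "hom2 A x y * (D12*D13*D23) = hom2 A x1 y1 * (L2*L3) * D23 - hom2 A x2 y2 * (L1*L3) * D13 + hom2 A x3 y3 * (L1*L2) * D12"
    unfolding hom2_def D12_def D13_def D23_def L1_def L2_def L3_def by (rule lagrange_poly)
  have nz: "D12 \<noteq> 0" "D13 \<noteq> 0" "D23 \<noteq> 0" using d12 d13 d23 by (simp_all add: D12_def D13_def D23_def)
  have "(m1 / (D12*D13) * w1 * (L2*L3) + (- m2 / (D12*D23)) * w2 * (L1*L3) + m3 / (D13*D23) * w3 * (L1*L2)) * (D12*D13*D23)
      = m1 * w1 * (L2*L3) * D23 - m2 * w2 * (L1*L3) * D13 + m3 * w3 * (L1*L2) * D12"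
    using nz by (simp add: field_simps)
  then have "hom2 A x y * (D12*D13*D23) = (m1 / (D12*D13) * w1 * (L2*L3) + (- m2 / (D12*D23)) * w2 * (L1*L3) + m3 / (D13*D23) * w3 * (L1*L2)) * (D12*D13*D23)"
    using lp h1 h2 h3 by simp
  then have "hom2 A x y = m1 / (D12*D13) * w1 * (L2*L3) + (- m2 / (D12*D23)) * w2 * (L1*L3) + m3 / (D13*D23) * w3 * (L1*L2)"
    using nz by simp
  then show ?thesis unfolding D12_def D13_def D23_def L1_def L2_def L3_def .
qed

lemma key:
  fixes P Q :: "complex poly" and a1 a2 r :: "complex option"
  assumes cop: "coprime P Q"
    and md: "max (degree P) (degree Q) = 2"
    and f1: "rat_sphere P Q a1 = a1" and f2: "rat_sphere P Q a2 = a2" and f3: "rat_sphere P Q r = r"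
    and dist: "distinct [a1, a2, r]"
    and att1: "norm (multiplier P Q a1) < 1"
  shows "fp_index P Q a1 = 1 / (1 - multiplier P Q a1) \<and> fp_index P Q a2 = 1 / (1 - multiplier P Q a2)
     \<and> fp_index P Q a1 \<noteq> 0 \<and> fp_index P Q a2 \<noteq> 0
     \<and> (\<forall>k m h. k \<ge> 1 \<longrightarrow> m \<ge> 1 \<longrightarrow> h \<noteq> 0 \<longrightarrow> fp_index P Q a1 = of_nat k / h \<longrightarrow> fp_index P Q a2 = of_nat m / h
           \<longrightarrow> mobius_conjugate (rat_sphere P Q) (newton_sphere h ([:-1,1:] ^ k * [:1,1:] ^ m)))"
proof -
  have dP: "degree P \<le> 2" and dQ: "degree Q \<le> 2" using md by auto
  obtain x1 y1 where r1: "rep a1 = (x1, y1)" by (cases "rep a1")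
  obtain x2 y2 where r2: "rep a2 = (x2, y2)" by (cases "rep a2")
  obtain x3 y3 where r3: "rep r = (x3, y3)" by (cases "rep r")
  have d12: "x1*y2 - y1*x2 \<noteq> 0" using rep_det[of a1 a2] dist r1 r2 by auto
  have d13: "x1*y3 - y1*x3 \<noteq> 0" using rep_det[of a1 r] dist r1 r3 by auto
  have d23: "x2*y3 - y2*x3 \<noteq> 0" using rep_det[of a2 r] dist r2 r3 by auto
  obtain \<mu>1 where m1: "\<mu>1 \<noteq> 0" "hom2 P x1 y1 = \<mu>1 * x1" "hom2 Q x1 y1 = \<mu>1 * y1"
    using fixed_mu[OF cop dP dQ md f1 r1] by blast
  obtain \<mu>2 where m2: "\<mu>2 \<noteq> 0" "hom2 P x2 y2 = \<mu>2 * x2" "hom2 Q x2 y2 = \<mu>2 * y2"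
    using fixed_mu[OF cop dP dQ md f2 r2] by blast
  obtain \<mu>3 where m3: "\<mu>3 \<noteq> 0" "hom2 P x3 y3 = \<mu>3 * x3" "hom2 Q x3 y3 = \<mu>3 * y3"
    using fixed_mu[OF cop dP dQ md f3 r3] by blast
  define \<tau>1 where "\<tau>1 = \<mu>1 / ((x1*y2 - y1*x2)*(x1*y3 - y1*x3))"
  define \<tau>2 where "\<tau>2 = - \<mu>2 / ((x1*y2 - y1*x2)*(x2*y3 - y2*x3))"
  define \<tau>3 where "\<tau>3 = \<mu>3 / ((x1*y3 - y1*x3)*(x2*y3 - y2*x3))"
  define \<kappa> where "\<kappa> = \<tau>1 + \<tau>2 + \<tau>3"
  have HP: "hom2 P x y = \<tau>1 * x1 * ((x*y2 - y*x2)*(x*y3 - y*x3)) + \<tau>2 * x2 * ((x*y1 - y*x1)*(x*y3 - y*x3))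
      + \<tau>3 * x3 * ((x*y1 - y*x1)*(x*y2 - y*x2))" for x y
    unfolding \<tau>1_def \<tau>2_def \<tau>3_def by (rule lag_tau[OF d12 d13 d23 m1(2) m2(2) m3(2)])
  have HQ: "hom2 Q x y = \<tau>1 * y1 * ((x*y2 - y*x2)*(x*y3 - y*x3)) + \<tau>2 * y2 * ((x*y1 - y*x1)*(x*y3 - y*x3))
      + \<tau>3 * y3 * ((x*y1 - y*x1)*(x*y2 - y*x2))" for x y
    unfolding \<tau>1_def \<tau>2_def \<tau>3_def by (rule lag_tau[OF d12 d13 d23 m1(3) m2(3) m3(3)])
  have F1: "x * hom2 Q x y - y * hom2 P x y = \<kappa> * (x*y1 - y*x1) * ((x*y2 - y*x2)*(x*y3 - y*x3))" for x y
    unfolding HP HQ \<kappa>_def by algebra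
  have F2: "x * hom2 Q x y - y * hom2 P x y = \<kappa> * (x*y2 - y*x2) * ((x*y1 - y*x1)*(x*y3 - y*x3))" for x y
    unfolding F1 by algebra
  have E1: "(x1*y2 - y1*x2)*(x1*y3 - y1*x3) \<noteq> 0" using d12 d13 by simp
  have E2a: "x2*y1 - y2*x1 = -(x1*y2 - y1*x2)" by algebra
  have E2: "(x2*y1 - y2*x1)*(x2*y3 - y2*x3) \<noteq> 0" using d12 d23 unfolding E2a by simp
  have mu1: "multiplier P Q a1 = 1 - \<kappa> * ((x1*y2 - y1*x2)*(x1*y3 - y1*x3)) / \<mu>1"
    using point_general(1)[OF cop md f1 r1 F1 m1(2,3,1)] .
  have mu2: "multiplier P Q a2 = 1 - \<kappa> * ((x2*y1 - y2*x1)*(x2*y3 - y2*x3)) / \<mu>2"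
    using point_general(1)[OF cop md f2 r2 F2 m2(2,3,1)] .
  have k0: "\<kappa> \<noteq> 0"
  proof
    assume "\<kappa> = 0"
    then have "multiplier P Q a1 = 1" using mu1 by simp
    then show False using att1 by simp
  qed
  have fp1: "fp_index P Q a1 = \<mu>1 / (\<kappa> * ((x1*y2 - y1*x2)*(x1*y3 - y1*x3)))"
    using point_general(2)[OF cop md f1 r1 F1 m1(2,3,1) k0 E1] .
  have fp2: "fp_index P Q a2 = \<mu>2 / (\<kappa> * ((x2*y1 - y2*x1)*(x2*y3 - y2*x3)))"
    using point_general(2)[OF cop md f2 r2 F2 m2(2,3,1) k0 E2] .
  have t1: "\<tau>1 = \<mu>1 / ((x1*y2 - y1*x2)*(x1*y3 - y1*x3))" by (simp add: \<tau>1_def)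
  have t2: "\<tau>2 = \<mu>2 / ((x2*y1 - y2*x1)*(x2*y3 - y2*x3))"
  proof -
    have "(x2*y1 - y2*x1)*(x2*y3 - y2*x3) = - ((x1*y2 - y1*x2)*(x2*y3 - y2*x3))" by algebra
    then show ?thesis by (simp add: \<tau>2_def)
  qed
  have t1nz: "\<tau>1 \<noteq> 0" using m1(1) E1 t1 by simp
  have t2nz: "\<tau>2 \<noteq> 0" using m2(1) E2 t2 by simp
  have t3nz: "\<tau>3 \<noteq> 0" using m3(1) d13 d23 by (simp add: \<tau>3_def)
  have fp1': "fp_index P Q a1 = \<tau>1 / \<kappa>" using fp1 t1 by simp
  have fp2': "fp_index P Q a2 = \<tau>2 / \<kappa>" using fp2 t2 by simp
  have mu1': "multiplier P Q a1 = 1 - \<kappa> / \<tau>1" using mu1 t1 E1 m1(1) by simp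
  have mu2': "multiplier P Q a2 = 1 - \<kappa> / \<tau>2" using mu2 t2 E2 m2(1) by simp
  have A: "fp_index P Q a1 = 1 / (1 - multiplier P Q a1)" using fp1' mu1' k0 t1nz by simp
  have B: "fp_index P Q a2 = 1 / (1 - multiplier P Q a2)" using fp2' mu2' k0 t2nz by simp
  have C: "fp_index P Q a1 \<noteq> 0" "fp_index P Q a2 \<noteq> 0" using fp1' fp2' k0 t1nz t2nz by simp_all
  have D: "mobius_conjugate (rat_sphere P Q) (newton_sphere h ([:-1,1:] ^ k * [:1,1:] ^ m))"
    if k1: "k \<ge> 1" and mm1: "m \<ge> 1" and h0: "h \<noteq> 0" and i1: "fp_index P Q a1 = of_nat k / h"
      and i2: "fp_index P Q a2 = of_nat m / h" for k m :: nat and h :: complex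
  proof -
    define c where "c = - \<kappa> / h"
    define u1 u2 u3 where "u1 = - (of_nat k :: complex)" and "u2 = - (of_nat m :: complex)"
      and "u3 = of_nat k + of_nat m - h"
    have e1: "\<tau>1 = c * u1" using i1 fp1' k0 h0 by (simp add: c_def u1_def field_simps)
    have e2: "\<tau>2 = c * u2" using i2 fp2' k0 h0 by (simp add: c_def u2_def field_simps)
    have e3: "\<tau>3 = c * u3" using e1 e2 h0 unfolding \<kappa>_def c_def u1_def u2_def u3_def
      by (simp add: field_simps)
    have cnz: "c \<noteq> 0" using k0 h0 by (simp add: c_def)
    have hkm: "h \<noteq> of_nat k + of_nat m"
    proof
      assume "h = of_nat k + of_nat m"
      then have "u3 = 0" by (simp add: u3_def)
      then show False using e3 t3nz by simp
    qed
    note NH = newton_hom[OF k1 mm1 h0 hkm]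
    define A' :: "complex poly" where "A' = [:h, of_nat k - of_nat m, of_nat k + of_nat m - h:]"
    define B' :: "complex poly" where "B' = [:of_nat k - of_nat m, of_nat k + of_nat m:]"
    show ?thesis
    proof (rule conj_core[OF d12 d13 d23, where RP = "hom2 P" and RQ = "hom2 Q" and NP = "hom2 A'" and NQ = "hom2 B'"])
      show "hom2 P x y = c * u1 * x1 * ((x*y2 - y*x2)*(x*y3 - y*x3)) + c * u2 * x2 * ((x*y1 - y*x1)*(x*y3 - y*x3))
          + c * u3 * x3 * ((x*y1 - y*x1)*(x*y2 - y*x2))" for x y
        using HP e1 e2 e3 by simp
      show "hom2 Q x y = c * u1 * y1 * ((x*y2 - y*x2)*(x*y3 - y*x3)) + c * u2 * y2 * ((x*y1 - y*x1)*(x*y3 - y*x3))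
          + c * u3 * y3 * ((x*y1 - y*x1)*(x*y2 - y*x2))" for x y
        using HQ e1 e2 e3 by simp
      show "\<And>x y. x \<noteq> 0 \<or> y \<noteq> 0 \<Longrightarrow> rat_sphere P Q (pt x y) = pt (hom2 P x y) (hom2 Q x y)"
        using rat_sphere_hom[OF cop dP dQ md] by simp
      show "c \<noteq> 0" by (rule cnz)
      show "hom2 A' s t = u1*((s+t)*(-t)) - u2*((s-t)*(-t)) + u3*((s-t)*(s+t))" for s t
        using NH(3)[of s t] unfolding A'_def u1_def u2_def u3_def by simp
      show "hom2 B' s t = u1*((s+t)*(-t)) + u2*((s-t)*(-t))" for s t
        using NH(4)[of s t] unfolding B'_def u1_def u2_def u3_def by simp
      show "\<And>x y. x \<noteq> 0 \<or> y \<noteq> 0 \<Longrightarrow> newton_sphere h ([:-1,1:] ^ k * [:1,1:] ^ m) (pt x y) = pt (hom2 A' x y) (hom2 B' x y)"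
        using NH(1) unfolding A'_def B'_def by simp
      show "\<And>x y. x \<noteq> 0 \<or> y \<noteq> 0 \<Longrightarrow> hom2 A' x y \<noteq> 0 \<or> hom2 B' x y \<noteq> 0"
        using NH(2) unfolding A'_def B'_def by simp
    qed
  qed
  show ?thesis using A B C D by blast
qed

theorem mainTheorem8:
  fixes P Q :: "complex poly" and a1 a2 r :: "complex option"
  assumes "coprime P Q"
    and "max (degree P) (degree Q) = 2"
    and "rat_sphere P Q a1 = a1" and "rat_sphere P Q a2 = a2" and "rat_sphere P Q r = r"
    and "distinct [a1, a2, r]"
    and "norm (multiplier P Q a1) < 1" and "norm (multiplier P Q a2) < 1"
    and "norm (multiplier P Q r) > 1"
  shows
    "(\<forall>lam. multiplier P Q a1 = lam \<and> multiplier P Q a2 = lam \<longrightarrow>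
        mobius_conjugate (rat_sphere P Q) (newton_sphere (1 - lam) [:-1, 0, 1:]))
   \<and> (\<forall>m n :: nat. m > 0 \<and> n > 0 \<and> multiplier P Q a1 = 0 \<and>
        multiplier P Q a2 = of_nat n / of_nat m \<longrightarrow>
        mobius_conjugate (rat_sphere P Q)
          (newton_sphere (of_nat m - of_nat n) ([:-1, 1:] ^ (m - n) * [:1, 1:] ^ m)))
   \<and> (\<forall>k m :: nat. fp_index P Q a1 / fp_index P Q a2 = of_nat k / of_nat m \<longrightarrow>
        (\<exists>h. h \<noteq> 0 \<and> mobius_conjugate (rat_sphere P Q)
                          (newton_sphere h ([:-1, 1:] ^ k * [:1, 1:] ^ m))))"
proof -
  note K = key[OF assms(1-7)]
  have I1: "fp_index P Q a1 = 1 / (1 - multiplier P Q a1)" using K by blast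
  have I2: "fp_index P Q a2 = 1 / (1 - multiplier P Q a2)" using K by blast
  have N1: "fp_index P Q a1 \<noteq> 0" and N2: "fp_index P Q a2 \<noteq> 0" using K by blast+
  have KC: "\<And>k m h. k \<ge> 1 \<Longrightarrow> m \<ge> 1 \<Longrightarrow> h \<noteq> 0 \<Longrightarrow> fp_index P Q a1 = of_nat k / h \<Longrightarrow>
      fp_index P Q a2 = of_nat m / h \<Longrightarrow>
      mobius_conjugate (rat_sphere P Q) (newton_sphere h ([:-1,1:] ^ k * [:1,1:] ^ m))"
    using K by blast
  have part1: "mobius_conjugate (rat_sphere P Q) (newton_sphere (1 - lam) [:-1, 0, 1:])"
    if "multiplier P Q a1 = lam" "multiplier P Q a2 = lam" for lam
  proof -
    have "lam \<noteq> 1" using assms(7) that by auto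
    then have h0: "1 - lam \<noteq> 0" by simp
    have p: "[:-1, 0, 1:] = ([:-1,1:] ^ 1 * [:1,1:] ^ 1 :: complex poly)" by simp
    show ?thesis unfolding p
      by (rule KC) (use I1 I2 that h0 in auto)
  qed
  have part2: "mobius_conjugate (rat_sphere P Q)
          (newton_sphere (of_nat m - of_nat n) ([:-1, 1:] ^ (m - n) * [:1, 1:] ^ m))"
    if "m > 0" "n > 0" "multiplier P Q a1 = 0" "multiplier P Q a2 = of_nat n / of_nat m" for m n :: nat
  proof -
    have "norm (of_nat n / of_nat m :: complex) < 1" using assms(8) that by simp
    then have "real n / real m < 1" by (simp add: norm_divide)
    then have nm: "n < m" using that(1) by (simp add: divide_less_eq)
    have hc: "(of_nat m - of_nat n :: complex) = of_nat (m - n)" using nm by (simp add: of_nat_diff)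
    have h0: "(of_nat m - of_nat n :: complex) \<noteq> 0" using nm by simp
    have f1: "fp_index P Q a1 = of_nat (m - n) / (of_nat m - of_nat n)" using I1 that(3) hc h0 by simp
    have mz: "(of_nat m :: complex) \<noteq> 0" using that(1) by simp
    have f2: "fp_index P Q a2 = of_nat m / (of_nat m - of_nat n)"
      using I2 that(4) mz h0 by (simp add: field_simps)
    show ?thesis by (rule KC[OF _ _ h0 f1 f2]) (use nm that in auto)
  qed
  have part3: "\<exists>h. h \<noteq> 0 \<and> mobius_conjugate (rat_sphere P Q) (newton_sphere h ([:-1, 1:] ^ k * [:1, 1:] ^ m))"
    if rt: "fp_index P Q a1 / fp_index P Q a2 = of_nat k / of_nat m" for k m :: nat
  proof -
    have "fp_index P Q a1 / fp_index P Q a2 \<noteq> 0" using N1 N2 by simp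
    then have k0: "k \<noteq> 0" and m0: "m \<noteq> 0" using rt by auto
    define h where "h = of_nat k / fp_index P Q a1"
    have h0: "h \<noteq> 0" using k0 N1 by (simp add: h_def)
    have f1: "fp_index P Q a1 = of_nat k / h" using k0 N1 by (simp add: h_def)
    have f2: "fp_index P Q a2 = of_nat m / h"
      using rt k0 m0 N1 N2 by (simp add: h_def field_simps)
    show ?thesis using KC[OF _ _ h0 f1 f2] k0 m0 h0 by auto
  qed
  show ?thesis using part1 part2 part3 by blast
qed

end
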